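(* Let $\alpha\ge0$ and $n\ge2$ with $n\ge\alpha$, and let $K$ be the event that $\mathscr{G}(n,\alpha/n)$ is connected. Then \[ P_{n,\alpha}(K)\le\Bigl(1-\bigl(1-\tfrac{\alpha}{n}\bigr)^{n-1}\Bigr)^{n-1}. \]
   Context: $\mathscr{G}(n,p)$ is the random graph on vertex set $\{1,\dots,n\}$ in which each of the $\binom n2$ unordered pairs is an edge independently with probability $p$; here $p=\alpha/n$, and $P_{n,\alpha}$ is the corresponding probability measure. *)

theory Defs
  imports Complex_Main
begin

definition gnp_pairs :: "nat \<Rightarrow> nat set set" where
  "gnp_pairs n = {e. \<exists>i j. e = {i, j} \<and> i \<in> {1..n} \<and> j \<in> {1..n} \<and> i \<noteq> j}"

definition adj_rel :: "nat set set \<Rightarrow> (nat \<times> nat) set" where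
  "adj_rel E = {(u, v). {u, v} \<in> E}"

definition graph_connected :: "nat \<Rightarrow> nat set set \<Rightarrow> bool" where
  "graph_connected n E \<longleftrightarrow> (\<forall>u\<in>{1..n}. \<forall>v\<in>{1..n}. (u, v) \<in> (adj_rel E)\<^sup>*)"

text \<open>Probability of a graph property Q in G(n,p): each of the (n choose 2) possible edges is
  present independently with probability p; sum over all edge sets E of the probability
  p^|E| (1-p)^(N-|E|) of E.\<close>
definition gnp_prob :: "nat \<Rightarrow> real \<Rightarrow> (nat set set \<Rightarrow> bool) \<Rightarrow> real" where
  "gnp_prob n p Q = (\<Sum>E\<in>{E. E \<subseteq> gnp_pairs n \<and> Q E}.
      p ^ card E * (1 - p) ^ (card (gnp_pairs n) - card E))"

end

theory Submission
  imports Defs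
begin

definition mu :: "real \<Rightarrow> 'a set \<Rightarrow> 'a set \<Rightarrow> real" where
  "mu p P E = p ^ card E * (1 - p) ^ card (P - E)"

definition pairs :: "nat set \<Rightarrow> nat set \<Rightarrow> nat set set" where
  "pairs A U = {e. \<exists>x y. e = {x, y} \<and> x \<noteq> y \<and> x \<in> A \<union> U \<and> y \<in> U}"

definition reach :: "nat set set \<Rightarrow> nat set \<Rightarrow> nat set \<Rightarrow> bool" where
  "reach E A U = (\<forall>u\<in>U. \<exists>a\<in>A. (a, u) \<in> (adj_rel E)\<^sup>*)"

definition FF :: "real \<Rightarrow> nat set \<Rightarrow> nat set \<Rightarrow> real" where
  "FF p A U = (\<Sum>E\<in>Pow (pairs A U). mu p (pairs A U) E * (if reach E A U then 1 else 0))"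

lemma mu_total:
  assumes "finite P"
  shows "(\<Sum>E\<in>Pow P. mu p P E) = 1"
proof -
  have "(\<Prod>x\<in>P. p + (1 - p)) = (\<Sum>X\<in>Pow P. (\<Prod>x\<in>X. p) * (\<Prod>x\<in>P-X. 1 - p))"
    by (rule prod_add[OF assms])
  then show ?thesis by (simp add: mu_def)
qed

lemma finite_pairs: "finite A \<Longrightarrow> finite U \<Longrightarrow> finite (pairs A U)"
proof -
  assume "finite A" "finite U"
  have "pairs A U \<subseteq> (\<lambda>(x,y). {x,y}) ` ((A \<union> U) \<times> U)"
    unfolding pairs_def by auto
  then show ?thesis using \<open>finite A\<close> \<open>finite U\<close> by (meson finite_SigmaI finite_UnI finite_imageI finite_subset)
qed

lemma sum_Pow_split:
  assumes "finite P1" "finite P2" "P1 \<inter> P2 = {}"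
  shows "(\<Sum>E\<in>Pow (P1 \<union> P2). h E) = (\<Sum>E1\<in>Pow P1. \<Sum>E2\<in>Pow P2. h (E1 \<union> E2))"
proof -
  have bij: "bij_betw (\<lambda>(a,b). a \<union> b) (Pow P1 \<times> Pow P2) (Pow (P1 \<union> P2))"
  proof (unfold bij_betw_def, intro conjI)
    show "inj_on (\<lambda>(a,b). a \<union> b) (Pow P1 \<times> Pow P2)"
    proof (rule inj_onI, clarsimp)
      fix a b c d assume "a \<subseteq> P1" "b \<subseteq> P2" "c \<subseteq> P1" "d \<subseteq> P2" "a \<union> b = c \<union> d"
      then show "a = c \<and> b = d" using assms(3) by blast
    qed
    show "(\<lambda>(a,b). a \<union> b) ` (Pow P1 \<times> Pow P2) = Pow (P1 \<union> P2)"
    proof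
      show "(\<lambda>(a,b). a \<union> b) ` (Pow P1 \<times> Pow P2) \<subseteq> Pow (P1 \<union> P2)" by auto
      show "Pow (P1 \<union> P2) \<subseteq> (\<lambda>(a,b). a \<union> b) ` (Pow P1 \<times> Pow P2)"
      proof
        fix E assume "E \<in> Pow (P1 \<union> P2)"
        then have "E = (\<lambda>(a,b). a \<union> b) (E \<inter> P1, E \<inter> P2)" "(E \<inter> P1, E \<inter> P2) \<in> Pow P1 \<times> Pow P2" by auto
        then show "E \<in> (\<lambda>(a,b). a \<union> b) ` (Pow P1 \<times> Pow P2)" by (metis image_eqI)
      qed
    qed
  qed
  have "(\<Sum>E1\<in>Pow P1. \<Sum>E2\<in>Pow P2. h (E1 \<union> E2)) = (\<Sum>(E1,E2)\<in>Pow P1 \<times> Pow P2. h (E1 \<union> E2))"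
    by (rule sum.cartesian_product)
  also have "\<dots> = (\<Sum>x\<in>Pow P1 \<times> Pow P2. h ((\<lambda>(a,b). a \<union> b) x))"
    by (rule sum.cong) auto
  also have "\<dots> = (\<Sum>E\<in>Pow (P1 \<union> P2). h E)"
    by (rule sum.reindex_bij_betw[OF bij])
  finally show ?thesis by simp
qed

lemma mu_union:
  assumes "finite P1" "finite P2" "P1 \<inter> P2 = {}" "E1 \<subseteq> P1" "E2 \<subseteq> P2"
  shows "mu p (P1 \<union> P2) (E1 \<union> E2) = mu p P1 E1 * mu p P2 E2"
proof -
  have f: "finite E1" "finite E2" using assms(1,2,4,5) finite_subset by blast+
  have c1: "card (E1 \<union> E2) = card E1 + card E2"
    using assms f by (intro card_Un_disjoint) auto
  have "(P1 \<union> P2) - (E1 \<union> E2) = (P1 - E1) \<union> (P2 - E2)" using assms by auto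
  then have c2: "card ((P1 \<union> P2) - (E1 \<union> E2)) = card (P1 - E1) + card (P2 - E2)"
    using assms by (simp add: card_Un_disjoint disjoint_iff)
  show ?thesis unfolding mu_def c1 c2 by (simp add: power_add)
qed

lemma marginal:
  assumes "finite R" "Q \<subseteq> R"
  shows "(\<Sum>E\<in>Pow R. mu p R E * g (E \<inter> Q)) = (\<Sum>E\<in>Pow Q. mu p Q E * g E)"
proof -
  have fQ: "finite Q" using assms finite_subset by auto
  have R: "R = (R - Q) \<union> Q" using assms by auto
  have "(\<Sum>E\<in>Pow R. mu p R E * g (E \<inter> Q)) =
     (\<Sum>E1\<in>Pow (R - Q). \<Sum>E2\<in>Pow Q. mu p ((R - Q) \<union> Q) (E1 \<union> E2) * g ((E1 \<union> E2) \<inter> Q))"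
    using sum_Pow_split[of "R - Q" Q "\<lambda>E. mu p ((R - Q) \<union> Q) E * g (E \<inter> Q)"] assms fQ R by auto
  also have "\<dots> = (\<Sum>E1\<in>Pow (R - Q). mu p (R - Q) E1 * (\<Sum>E2\<in>Pow Q. mu p Q E2 * g E2))"
  proof (rule sum.cong[OF refl])
    fix E1 assume E1: "E1 \<in> Pow (R - Q)"
    show "(\<Sum>E2\<in>Pow Q. mu p ((R - Q) \<union> Q) (E1 \<union> E2) * g ((E1 \<union> E2) \<inter> Q)) =
        mu p (R - Q) E1 * (\<Sum>E2\<in>Pow Q. mu p Q E2 * g E2)"
      unfolding sum_distrib_left
    proof (rule sum.cong[OF refl])
      fix E2 assume E2: "E2 \<in> Pow Q"
      have "(E1 \<union> E2) \<inter> Q = E2" using E1 E2 by auto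
      moreover have "mu p ((R - Q) \<union> Q) (E1 \<union> E2) = mu p (R - Q) E1 * mu p Q E2"
        using E1 E2 assms fQ by (intro mu_union) auto
      ultimately show "mu p ((R - Q) \<union> Q) (E1 \<union> E2) * g ((E1 \<union> E2) \<inter> Q) =
          mu p (R - Q) E1 * (mu p Q E2 * g E2)" by simp
    qed
  qed
  also have "\<dots> = (\<Sum>E1\<in>Pow (R - Q). mu p (R - Q) E1) * (\<Sum>E2\<in>Pow Q. mu p Q E2 * g E2)"
    by (simp add: sum_distrib_right)
  also have "\<dots> = (\<Sum>E2\<in>Pow Q. mu p Q E2 * g E2)"
    using mu_total[of "R - Q" p] assms by simp
  finally show ?thesis .
qed


lemma reach_path:
  assumes AU: "A \<inter> U = {}" and w: "w \<in> A" and K: "K \<subseteq> U" and E: "E \<subseteq> pairs A U"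
    and wK: "\<And>u. u \<in> U \<Longrightarrow> {w, u} \<in> E \<longleftrightarrow> u \<in> K"
    and path: "(a, v) \<in> (adj_rel E)\<^sup>*" and a: "a \<in> A"
  shows "v \<in> A \<union> K \<or> (\<exists>x\<in>A - {w} \<union> K. (x, v) \<in> (adj_rel (E \<inter> pairs (A - {w} \<union> K) (U - K)))\<^sup>*)"
  using path
proof (induction rule: rtrancl_induct)
  case base
  then show ?case using a by auto
next
  case (step v y)
  let ?A' = "A - {w} \<union> K" and ?U' = "U - K"
  let ?R' = "adj_rel (E \<inter> pairs ?A' ?U')"
  have e: "{v, y} \<in> E" using step.hyps(2) by (simp add: adj_rel_def)
  then have "{v, y} \<in> pairs A U" using E by auto
  then obtain x' y' where xy: "{v, y} = {x', y'}" "x' \<noteq> y'" "x' \<in> A \<union> U" "y' \<in> U"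
    unfolding pairs_def by auto
  have vy: "v \<in> A \<union> U" "y \<in> A \<union> U" "v \<noteq> y" using xy by (auto simp: doubleton_eq_iff)
  show ?case
  proof (cases "y \<in> A \<union> K")
    case True then show ?thesis by simp
  next
    case False
    then have yU: "y \<in> ?U'" using vy by auto
    have epair: "v \<in> ?A' \<union> ?U' \<Longrightarrow> (v, y) \<in> ?R'"
      using e yU vy(3) unfolding adj_rel_def pairs_def by blast
    show ?thesis
    proof (cases "v = w")
      case True
      then have "y \<in> K" using wK[of y] e yU by auto
      then show ?thesis using False by simp
    next
      case vw: False
      show ?thesis
      proof (cases "v \<in> A \<union> K")
        case True
        then have "v \<in> ?A'" using vw by auto
        then show ?thesis using epair by blast
      next
        case vn: False
        then obtain x where x: "x \<in> ?A'" "(x, v) \<in> ?R'\<^sup>*" using step.IH by blast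
        have "v \<in> ?U'" using vn vy by auto
        then have "(v, y) \<in> ?R'" using epair by blast
        then show ?thesis using x by (meson rtrancl.rtrancl_into_rtrancl)
      qed
    qed
  qed
qed


lemma key_step:
  assumes p0: "0 \<le> p" and p1: "p \<le> 1" and fA: "finite A" and fU: "finite U" and AU: "A \<inter> U = {}" and w: "w \<in> A"
  shows "FF p A U \<le> (\<Sum>K\<in>Pow U. p ^ card K * (1 - p) ^ card (U - K) * FF p (A - {w} \<union> K) (U - K))"
proof -
  define P where "P = pairs A U"
  define g where "g = (\<lambda>u::nat. {w, u})"
  define W where "W = g ` U"
  define R where "R = P - W"
  define ind where "ind = (\<lambda>E. if reach E A U then 1 else (0::real))"
  have fP: "finite P" unfolding P_def using fA fU by (rule finite_pairs)
  have injg: "inj_on g U" unfolding g_def inj_on_def using AU w by (auto simp: doubleton_eq_iff)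
  have WP: "W \<subseteq> P" unfolding W_def g_def P_def pairs_def using AU w by blast
  have fW: "finite W" using fU W_def by simp
  have fR: "finite R" using fP R_def by simp
  have PWR: "P = W \<union> R" "W \<inter> R = {}" using WP R_def by auto
  have "FF p A U = (\<Sum>E\<in>Pow (W \<union> R). mu p (W \<union> R) E * ind E)"
    unfolding FF_def ind_def P_def[symmetric] PWR(1)[symmetric] by simp
  also have "\<dots> = (\<Sum>E1\<in>Pow W. \<Sum>E'\<in>Pow R. mu p (W \<union> R) (E1 \<union> E') * ind (E1 \<union> E'))"
    by (rule sum_Pow_split[OF fW fR PWR(2)])
  also have "\<dots> = (\<Sum>E1\<in>Pow W. mu p W E1 * (\<Sum>E'\<in>Pow R. mu p R E' * ind (E1 \<union> E')))"
    unfolding sum_distrib_left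
    by (intro sum.cong refl) (simp add: mu_union[OF fW fR PWR(2)])
  also have "\<dots> = (\<Sum>K\<in>Pow U. mu p W (g ` K) * (\<Sum>E'\<in>Pow R. mu p R E' * ind (g ` K \<union> E')))"
  proof -
    have "Pow W = image g ` Pow U" unfolding W_def by (rule image_Pow_surj[symmetric]) simp
    moreover have "inj_on (image g) (Pow U)" by (rule inj_on_image_Pow[OF injg])
    ultimately show ?thesis by (simp add: sum.reindex)
  qed
  also have "\<dots> \<le> (\<Sum>K\<in>Pow U. p ^ card K * (1 - p) ^ card (U - K) * FF p (A - {w} \<union> K) (U - K))"
  proof (rule sum_mono)
    fix K assume KU: "K \<in> Pow U"
    define A' where "A' = A - {w} \<union> K"
    define U' where "U' = U - K"
    define P' where "P' = pairs A' U'"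
    have gK: "W - g ` K = g ` (U - K)" unfolding W_def using injg KU by (auto simp: inj_on_def)
    have mW: "mu p W (g ` K) = p ^ card K * (1 - p) ^ card (U - K)"
      unfolding mu_def gK using injg KU
      by (simp add: card_image inj_on_subset)
    have P'R: "P' \<subseteq> R"
    proof
      fix e assume "e \<in> P'"
      then obtain x y where xy: "e = {x, y}" "x \<noteq> y" "x \<in> A' \<union> U'" "y \<in> U'"
        unfolding P'_def pairs_def by auto
      have "e \<in> P" unfolding P_def pairs_def using xy KU unfolding A'_def U'_def by blast
      moreover have "e \<notin> W"
      proof
        assume "e \<in> W"
        then obtain u where "u \<in> U" "e = {w, u}" unfolding W_def g_def by auto
        then show False using xy AU w KU unfolding A'_def U'_def by (auto simp: doubleton_eq_iff)
      qed
      ultimately show "e \<in> R" unfolding R_def by simp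
    qed
    have fA': "finite A'" "finite U'" using fA fU KU finite_subset unfolding A'_def U'_def by auto
    have ind_le: "ind (g ` K \<union> E') \<le> (if reach (E' \<inter> P') A' U' then 1 else 0)" if E': "E' \<in> Pow R" for E'
    proof (cases "reach (g ` K \<union> E') A U")
      case False then show ?thesis unfolding ind_def by simp
    next
      case True
      let ?E = "g ` K \<union> E'"
      have EP: "?E \<subseteq> pairs A U" using E' KU WP unfolding R_def W_def P_def by auto
      have wK: "{w, u} \<in> ?E \<longleftrightarrow> u \<in> K" if "u \<in> U" for u
      proof
        assume "{w, u} \<in> ?E"
        moreover have "{w, u} \<notin> E'" using E' that unfolding R_def W_def g_def by auto
        ultimately obtain k where "k \<in> K" "{w, u} = {w, k}" unfolding g_def by auto
        then show "u \<in> K" by (auto simp: doubleton_eq_iff)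
      qed (auto simp: g_def)
      have "reach (?E \<inter> P') A' U'"
        unfolding reach_def
      proof
        fix u assume u: "u \<in> U'"
        then have "u \<in> U" unfolding U'_def by simp
        then obtain a where a: "a \<in> A" "(a, u) \<in> (adj_rel ?E)\<^sup>*" using True unfolding reach_def by blast
        from reach_path[OF AU w _ EP wK a(2) a(1)] KU
        have "u \<in> A \<union> K \<or> (\<exists>x\<in>A'. (x, u) \<in> (adj_rel (?E \<inter> P'))\<^sup>*)"
          unfolding A'_def U'_def P'_def by auto
        then show "\<exists>x\<in>A'. (x, u) \<in> (adj_rel (?E \<inter> P'))\<^sup>*" using u AU unfolding U'_def by auto
      qed
      moreover have "?E \<inter> P' = E' \<inter> P'" using P'R KU unfolding R_def W_def by auto
      ultimately show ?thesis by (simp add: ind_def)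
    qed
    have "(\<Sum>E'\<in>Pow R. mu p R E' * ind (g ` K \<union> E')) \<le>
        (\<Sum>E'\<in>Pow R. mu p R E' * (if reach (E' \<inter> P') A' U' then 1 else 0))"
      using ind_le by (intro sum_mono mult_left_mono) (auto simp: mu_def p0 p1)
    also have "\<dots> = FF p A' U'"
      unfolding FF_def P'_def[symmetric]
      by (rule marginal[OF fR P'R, of p "\<lambda>E. if reach E A' U' then 1 else 0"])
    finally have "(\<Sum>E'\<in>Pow R. mu p R E' * ind (g ` K \<union> E')) \<le> FF p A' U'" .
    then show "mu p W (g ` K) * (\<Sum>E'\<in>Pow R. mu p R E' * ind (g ` K \<union> E')) \<le>
        p ^ card K * (1 - p) ^ card (U - K) * FF p (A - {w} \<union> K) (U - K)"
      unfolding mW A'_def U'_def using p0 p1 by (intro mult_left_mono) auto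
  qed
  finally show ?thesis .
qed


lemma FF_bound:
  assumes p0: "0 \<le> p" and p1: "p \<le> 1"
  shows "finite A \<Longrightarrow> finite U \<Longrightarrow> A \<inter> U = {} \<Longrightarrow>
    FF p A U \<le> (1 - (1 - p) ^ (card A + card U - 1)) ^ card U"
proof (induction "card A + card U" arbitrary: A U rule: less_induct)
  case less
  show ?case
  proof (cases "U = {}")
    case True
    have "FF p A U = (\<Sum>E\<in>Pow (pairs A U). mu p (pairs A U) E)"
      unfolding FF_def reach_def True by simp
    also have "\<dots> = 1" using mu_total finite_pairs less.prems by blast
    finally show ?thesis using True by simp
  next
    case Une: False
    have q1: "(1 - p) ^ m \<le> 1" for m using p0 p1 by (simp add: power_le_one)
    show ?thesis
    proof (cases "A = {}")
      case True
      have "FF p A U = 0" unfolding FF_def reach_def True using Une by auto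
      then show ?thesis using q1 by simp
    next
      case False
      then obtain w where w: "w \<in> A" by auto
      define m where "m = card A + card U - 1"
      have cA: "card A \<ge> 1" "card U \<ge> 1" using w Une less.prems
        by (auto simp: Suc_le_eq card_gt_0_iff)
      define c where "c = 1 - (1 - p) ^ (m - 1)"
      have c0: "0 \<le> c" unfolding c_def using q1 by simp
      have "FF p A U \<le> (\<Sum>K\<in>Pow U. p ^ card K * (1 - p) ^ card (U - K) * FF p (A - {w} \<union> K) (U - K))"
        by (rule key_step[OF p0 p1 less.prems w])
      also have "\<dots> \<le> (\<Sum>K\<in>Pow U. p ^ card K * (1 - p) ^ card (U - K) * c ^ card (U - K))"
      proof (rule sum_mono)
        fix K assume K: "K \<in> Pow U"
        have fK: "finite K" using K less.prems finite_subset by auto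
        have c1: "card (A - {w} \<union> K) = card A - 1 + card K"
          using K less.prems w fK by (subst card_Un_disjoint) auto
        have c2: "card (U - K) = card U - card K" using K fK by (simp add: card_Diff_subset)
        have "card K \<le> card U" using K less.prems card_mono by auto
        then have cs: "card (A - {w} \<union> K) + card (U - K) = m" unfolding m_def c1 c2 using cA by simp
        have "FF p (A - {w} \<union> K) (U - K) \<le> (1 - (1 - p) ^ (card (A - {w} \<union> K) + card (U - K) - 1)) ^ card (U - K)"
        proof (rule less.hyps)
          show "card (A - {w} \<union> K) + card (U - K) < card A + card U" using cs cA unfolding m_def by simp
          show "finite (A - {w} \<union> K)" "finite (U - K)" using less.prems fK by auto
          show "(A - {w} \<union> K) \<inter> (U - K) = {}" using less.prems(3) by blast
        qed
        then have "FF p (A - {w} \<union> K) (U - K) \<le> c ^ card (U - K)" unfolding cs c_def .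
        then show "p ^ card K * (1 - p) ^ card (U - K) * FF p (A - {w} \<union> K) (U - K)
            \<le> p ^ card K * (1 - p) ^ card (U - K) * c ^ card (U - K)"
          using p0 p1 by (intro mult_left_mono) auto
      qed
      also have "\<dots> = (\<Sum>K\<in>Pow U. (\<Prod>x\<in>K. p) * (\<Prod>x\<in>U - K. (1 - p) * c))"
        by (simp add: power_mult_distrib mult.assoc)
      also have "\<dots> = (\<Prod>x\<in>U. p + (1 - p) * c)"
        by (rule prod_add[symmetric]) (use less.prems in auto)
      also have "\<dots> = (1 - (1 - p) ^ m) ^ card U"
      proof -
        have "m = Suc (m - 1)" unfolding m_def using cA by simp
        then have "(1 - p) ^ m = (1 - p) * (1 - p) ^ (m - 1)" by (metis power_Suc)
        then have "p + (1 - p) * c = 1 - (1 - p) ^ m" unfolding c_def by (simp add: algebra_simps)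
        then show ?thesis by simp
      qed
      finally show ?thesis unfolding m_def .
    qed
  qed
qed

theorem lemma3p3:
  fixes \<alpha> :: real and n :: nat
  assumes "\<alpha> \<ge> 0" and "n \<ge> 2" and "real n \<ge> \<alpha>"
  shows "gnp_prob n (\<alpha> / real n) (graph_connected n)
           \<le> (1 - (1 - \<alpha> / real n) ^ (n - 1)) ^ (n - 1)"
proof -
  define p where "p = \<alpha> / real n"
  have p0: "0 \<le> p" unfolding p_def using assms by simp
  have p1: "p \<le> 1" unfolding p_def using assms by (simp add: divide_le_eq_1)
  have gp: "gnp_pairs n = pairs {1} {2..n}"
    unfolding gnp_pairs_def pairs_def
  proof (intro Collect_cong iffI)
    fix e assume "\<exists>i j. e = {i, j} \<and> i \<in> {1..n} \<and> j \<in> {1..n} \<and> i \<noteq> j"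
    then obtain i j where ij: "e = {i, j}" "i \<in> {1..n}" "j \<in> {1..n}" "i \<noteq> j" by blast
    show "\<exists>x y. e = {x, y} \<and> x \<noteq> y \<and> x \<in> {1} \<union> {2..n} \<and> y \<in> {2..n}"
    proof (cases "j = 1")
      case True
      then show ?thesis using ij by (rule_tac x=j in exI, rule_tac x=i in exI) auto
    next
      case False
      then show ?thesis using ij by (rule_tac x=i in exI, rule_tac x=j in exI) auto
    qed
  next
    fix e assume "\<exists>x y. e = {x, y} \<and> x \<noteq> y \<and> x \<in> {1} \<union> {2..n} \<and> y \<in> {2..n}"
    then obtain x y where "e = {x, y}" "x \<noteq> y" "x \<in> {1} \<union> {2..n}" "y \<in> {2..n}" by blast
    then show "\<exists>i j. e = {i, j} \<and> i \<in> {1..n} \<and> j \<in> {1..n} \<and> i \<noteq> j"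
      by (rule_tac x=x in exI, rule_tac x=y in exI) auto
  qed
  define G where "G = gnp_pairs n"
  have fG: "finite G" unfolding G_def gp by (intro finite_pairs) auto
  have "gnp_prob n p (graph_connected n) =
      (\<Sum>E\<in>{E \<in> Pow G. graph_connected n E}. p ^ card E * (1 - p) ^ (card G - card E))"
    unfolding gnp_prob_def G_def by (rule sum.cong) auto
  also have "\<dots> = (\<Sum>E\<in>Pow G. if graph_connected n E then p ^ card E * (1 - p) ^ (card G - card E) else 0)"
    unfolding sum.inter_filter[OF finite_Pow_iff[THEN iffD2, OF fG]] by (simp add: Pow_def)
  also have "\<dots> \<le> (\<Sum>E\<in>Pow G. mu p G E * (if reach E {1} {2..n} then 1 else 0))"
  proof (rule sum_mono)
    fix E assume E: "E \<in> Pow G"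
    have fE: "finite E" using E fG finite_subset by auto
    have "card (G - E) = card G - card E" using E fE by (simp add: card_Diff_subset)
    then have m: "mu p G E = p ^ card E * (1 - p) ^ (card G - card E)" unfolding mu_def by simp
    have "graph_connected n E \<Longrightarrow> reach E {1} {2..n}"
      unfolding graph_connected_def reach_def using assms(2) by auto
    then show "(if graph_connected n E then p ^ card E * (1 - p) ^ (card G - card E) else 0)
        \<le> mu p G E * (if reach E {1} {2..n} then 1 else 0)"
      unfolding m using p0 p1 by auto
  qed
  also have "\<dots> = FF p {1} {2..n}" unfolding FF_def G_def gp ..
  also have "\<dots> \<le> (1 - (1 - p) ^ (card {1::nat} + card {2..n} - 1)) ^ card {2..n}"
    by (rule FF_bound[OF p0 p1]) auto
  also have "\<dots> = (1 - (1 - p) ^ (n - 1)) ^ (n - 1)" using assms(2) by simp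
  finally show ?thesis unfolding p_def .
qed

end
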